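(* Let $\mu>0$, $u_a\in\mathbb{R}$, $\alpha_->0$, $\alpha_+>0$, $u_->u_+$, $\sigma_0\in(u_+,u_-)$, $\omega_0\ge0$. Set $\alpha_l\equiv\alpha_-$, $\alpha_r\equiv\alpha_+$, $u_l(t)=u_a+(u_--u_a)e^{-\mu t}$, $u_r(t)=u_a+(u_+-u_a)e^{-\mu t}$. Then the initial value problem $$\frac{d\omega}{dt}=(\alpha_r-\alpha_l)\sigma-(\alpha_ru_r-\alpha_lu_l),\quad \frac{d(\omega\sigma)}{dt}=(\alpha_ru_r-\alpha_lu_l)\sigma-(\alpha_ru_r^2-\alpha_lu_l^2)+\mu(u_a-\sigma)\omega,$$ $$\omega(0)=\omega_0,\qquad \sigma(0)\omega(0)=\sigma_0\omega_0,$$ has a solution $(\omega,\sigma)\in\mathcal{C}^1([0,\infty))^2$ satisfying Lax's entropy condition $u_r(t)<\sigma(t)<u_l(t)$ for all $t\ge0$. *)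

theory Defs
  imports Complex_Main
begin

definition ustate :: "real \<Rightarrow> real \<Rightarrow> real \<Rightarrow> real \<Rightarrow> real" where
  "ustate ua u0 \<mu> t = ua + (u0 - ua) * exp (- \<mu> * t)"

end

theory Submission imports Defs begin

lemma transfer:
  fixes \<mu> ua \<alpha>m \<alpha>p um up \<sigma>0 \<omega>0 :: real and W Y W' Y' :: "real \<Rightarrow> real"
  assumes mu: "\<mu> > 0"
  and dW: "\<And>s. s \<ge> 0 \<Longrightarrow> (W has_real_derivative W' s) (at s within {0..})"
  and dY: "\<And>s. s \<ge> 0 \<Longrightarrow> (Y has_real_derivative Y' s) (at s within {0..})"
  and cW': "continuous_on {0..} W'"
  and cY': "continuous_on {0..} Y'"
  and eW: "\<And>s. s \<ge> 0 \<Longrightarrow> W' s = \<alpha>p*(Y s - (up-ua)) + \<alpha>m*((um-ua) - Y s)"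
  and eY: "\<And>s. s \<ge> 0 \<Longrightarrow> W s * Y' s = \<alpha>m*((um-ua) - Y s)^2 - \<alpha>p*(Y s - (up-ua))^2"
  and bd: "\<And>s. s \<ge> 0 \<Longrightarrow> (up-ua) < Y s \<and> Y s < (um-ua)"
  and i1: "W 0 = \<omega>0" and i2: "(ua + Y 0) * W 0 = \<sigma>0 * \<omega>0"
  shows "\<exists>(\<omega>::real \<Rightarrow> real) (\<sigma>::real \<Rightarrow> real) \<omega>' \<sigma>'.
    (\<forall>t\<ge>0. (\<omega> has_real_derivative \<omega>' t) (at t within {0..})
            \<and> (\<sigma> has_real_derivative \<sigma>' t) (at t within {0..}))
    \<and> continuous_on {0..} \<omega>' \<and> continuous_on {0..} \<sigma>'
    \<and> (\<forall>t\<ge>0. \<omega>' t = (\<alpha>p - \<alpha>m) * \<sigma> t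
                 - (\<alpha>p * ustate ua up \<mu> t - \<alpha>m * ustate ua um \<mu> t))
    \<and> (\<forall>t\<ge>0. ((\<lambda>s. \<omega> s * \<sigma> s) has_real_derivative
           ((\<alpha>p * ustate ua up \<mu> t - \<alpha>m * ustate ua um \<mu> t) * \<sigma> t
            - (\<alpha>p * (ustate ua up \<mu> t)\<^sup>2 - \<alpha>m * (ustate ua um \<mu> t)\<^sup>2)
            + \<mu> * (ua - \<sigma> t) * \<omega> t)) (at t within {0..}))
    \<and> \<omega> 0 = \<omega>0 \<and> \<sigma> 0 * \<omega> 0 = \<sigma>0 * \<omega>0
    \<and> (\<forall>t\<ge>0. ustate ua up \<mu> t < \<sigma> t \<and> \<sigma> t < ustate ua um \<mu> t)"
proof -
  define tau where "tau t = (1 - exp (-\<mu>*t))/\<mu>" for t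
  have tau0: "tau t \<ge> 0" if "t \<ge> 0" for t
    using mu that by (simp add: tau_def)
  have tauimg: "tau ` {0..} \<subseteq> {0..}" using tau0 by auto
  have dtau: "(tau has_real_derivative exp (-\<mu>*t)) (at t within {0..})" for t
    unfolding tau_def using mu
    by (auto intro!: derivative_eq_intros simp: field_simps)
  have ctau: "continuous_on {0..} tau"
    by (rule DERIV_continuous_on[OF dtau])
  have cW: "continuous_on {0..} W" by (rule DERIV_continuous_on[OF dW]) auto
  have cY: "continuous_on {0..} Y" by (rule DERIV_continuous_on[OF dY]) auto
  have chain: "((F \<circ> tau) has_real_derivative F' (tau t) * exp (-\<mu>*t)) (at t within {0..})"
    if "t \<ge> 0" and dF: "\<And>s. s \<ge> 0 \<Longrightarrow> (F has_real_derivative F' s) (at s within {0..})" for F F' t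
    apply (rule DERIV_image_chain[OF _ dtau])
    apply (rule DERIV_subset[OF dF tauimg])
    using tau0 that by auto
  have comp: "continuous_on {0..} (F \<circ> tau)" if "continuous_on {0..} F" for F
    by (rule continuous_on_compose[OF ctau continuous_on_subset[OF that tauimg]])
  define \<omega> where "\<omega> = (\<lambda>t. W (tau t))"
  define \<sigma> where "\<sigma> = (\<lambda>t. ua + exp (-\<mu>*t) * Y (tau t))"
  define \<omega>' where "\<omega>' t = W' (tau t) * exp (-\<mu>*t)" for t
  define \<sigma>' where "\<sigma>' t = exp (-\<mu>*t) * (-\<mu>) * Y (tau t) + exp (-\<mu>*t) * (Y' (tau t) * exp (-\<mu>*t))" for t
  have dom: "(\<omega> has_real_derivative \<omega>' t) (at t within {0..})" if "t \<ge> 0" for t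
    using chain[OF that dW] by (simp add: \<omega>_def \<omega>'_def o_def)
  have dsig: "(\<sigma> has_real_derivative \<sigma>' t) (at t within {0..})" if "t \<ge> 0" for t
  proof -
    have "((\<lambda>t. Y (tau t)) has_real_derivative Y' (tau t) * exp (-\<mu>*t)) (at t within {0..})"
      using chain[OF that dY] by (simp add: o_def)
    then show ?thesis unfolding \<sigma>_def \<sigma>'_def
      by (auto intro!: derivative_eq_intros simp: algebra_simps)
  qed
  have cexp: "continuous_on {0..} (\<lambda>t::real. exp (-\<mu>*t))"
    by (intro continuous_intros)
  have c1: "continuous_on {0..} \<omega>'"
    using comp[OF cW'] cexp unfolding \<omega>'_def o_def by (intro continuous_intros) auto
  have c2: "continuous_on {0..} \<sigma>'"
    using comp[OF cY'] comp[OF cY] cexp unfolding \<sigma>'_def o_def by (intro continuous_intros) auto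
  have e1: "\<omega>' t = (\<alpha>p - \<alpha>m) * \<sigma> t - (\<alpha>p * ustate ua up \<mu> t - \<alpha>m * ustate ua um \<mu> t)" if "t \<ge> 0" for t
    unfolding \<omega>'_def \<sigma>_def ustate_def eW[OF tau0[OF that]]
    by (simp add: algebra_simps)
  have e2: "((\<lambda>s. \<omega> s * \<sigma> s) has_real_derivative
           ((\<alpha>p * ustate ua up \<mu> t - \<alpha>m * ustate ua um \<mu> t) * \<sigma> t
            - (\<alpha>p * (ustate ua up \<mu> t)\<^sup>2 - \<alpha>m * (ustate ua um \<mu> t)\<^sup>2)
            + \<mu> * (ua - \<sigma> t) * \<omega> t)) (at t within {0..})" if "t \<ge> 0" for t
  proof -
    have d: "((\<lambda>s. \<omega> s * \<sigma> s) has_real_derivative \<omega> t * \<sigma>' t + \<omega>' t * \<sigma> t) (at t within {0..})"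
      by (rule DERIV_mult'[OF dom[OF that] dsig[OF that]])
    define v where "v = exp (-\<mu>*t)"
    define y where "y = Y (tau t)"
    define w where "w = W (tau t)"
    define y' where "y' = Y' (tau t)"
    have h1: "w * y' = \<alpha>m*((um-ua) - y)^2 - \<alpha>p*(y - (up-ua))^2"
      using eY[OF tau0[OF that]] by (simp add: w_def y_def y'_def)
    have h2: "W' (tau t) = \<alpha>p*(y - (up-ua)) + \<alpha>m*((um-ua) - y)"
      using eW[OF tau0[OF that]] by (simp add: y_def)
    have "\<omega> t * \<sigma>' t + \<omega>' t * \<sigma> t = v*v*(w*y') - \<mu>*v*y*w + (\<alpha>p*(y - (up-ua)) + \<alpha>m*((um-ua) - y)) * v * (ua + v*y)"
      unfolding \<omega>_def \<sigma>'_def \<omega>'_def \<sigma>_def h2 by (simp add: v_def y_def w_def y'_def algebra_simps)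
    also have "\<dots> = ((\<alpha>p * ustate ua up \<mu> t - \<alpha>m * ustate ua um \<mu> t) * \<sigma> t
            - (\<alpha>p * (ustate ua up \<mu> t)\<^sup>2 - \<alpha>m * (ustate ua um \<mu> t)\<^sup>2)
            + \<mu> * (ua - \<sigma> t) * \<omega> t)"
      unfolding h1 ustate_def \<sigma>_def \<omega>_def v_def[symmetric] y_def[symmetric] w_def[symmetric]
      by (simp add: power2_eq_square algebra_simps)
    finally show ?thesis using d by simp
  qed
  have b: "ustate ua up \<mu> t < \<sigma> t \<and> \<sigma> t < ustate ua um \<mu> t" if "t \<ge> 0" for t
  proof -
    have "up - ua < Y (tau t)" "Y (tau t) < um - ua" using bd[OF tau0[OF that]] by auto
    moreover have "exp (-\<mu>*t) > 0" by simp
    ultimately have "exp (-\<mu>*t) * (up - ua) < exp (-\<mu>*t) * Y (tau t)"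
       "exp (-\<mu>*t) * Y (tau t) < exp (-\<mu>*t) * (um - ua)"
      by (simp_all add: mult_strict_left_mono)
    then show ?thesis unfolding ustate_def \<sigma>_def
      by (simp add: algebra_simps)
  qed
  have t0: "tau 0 = 0" by (simp add: tau_def)
  show ?thesis
    apply (rule exI[of _ \<omega>], rule exI[of _ \<sigma>], rule exI[of _ \<omega>'], rule exI[of _ \<sigma>'])
    using dom dsig c1 c2 e1 e2 b i1 i2 t0 by (simp add: \<omega>_def \<sigma>_def)
qed

lemma pos_case:
  fixes \<alpha>m \<alpha>p a b y0 \<omega>0 :: real
  assumes am: "\<alpha>m>0" and ap: "\<alpha>p>0" and ya: "a<y0" and yb: "y0<b" and w0: "\<omega>0>0"
  shows "\<exists>W Y W' Y'. (\<forall>s\<ge>0. (W has_real_derivative W' s) (at s within {0..}) \<and> (Y has_real_derivative Y' s) (at s within {0..}))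
    \<and> continuous_on {0..} W' \<and> continuous_on {0..} Y'
    \<and> (\<forall>s\<ge>0. W' s = \<alpha>p*(Y s - a) + \<alpha>m*(b - Y s))
    \<and> (\<forall>s\<ge>0. W s * Y' s = \<alpha>m*(b - Y s)^2 - \<alpha>p*(Y s - a)^2)
    \<and> (\<forall>s\<ge>0. a < Y s \<and> Y s < b) \<and> W 0 = \<omega>0 \<and> Y 0 = y0"
proof -
  define k where "k = sqrt \<alpha>p"
  define m where "m = sqrt \<alpha>m"
  have k: "k > 0" "k^2 = \<alpha>p" using ap by (auto simp: k_def)
  have m: "m > 0" "m^2 = \<alpha>m" using am by (auto simp: m_def)
  define p0 where "p0 = y0 - a"
  define r0 where "r0 = b - y0"
  have p0: "p0 > 0" and r0: "r0 > 0" using ya yb by (auto simp: p0_def r0_def)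
  have ba: "b - a = p0 + r0" by (simp add: p0_def r0_def)
  define K where "K = \<alpha>p*\<alpha>m*(b-a)^2"
  have K: "K > 0" using ap am ya yb by (simp add: K_def)
  have Kkm: "K = (k*m*(b-a))^2" using k m by (simp add: K_def power_mult_distrib)
  define R0 where "R0 = 2*\<omega>0*(\<alpha>p*p0 + \<alpha>m*r0)"
  have R0: "R0 > 0" using w0 ap am p0 r0 by (simp add: R0_def add_pos_pos)
  define q where "q s = \<omega>0^2 + R0*s + K*s^2" for s
  define Rf where "Rf s = R0 + 2*K*s" for s
  define W where "W s = sqrt (q s)" for s
  define U where "U s = (Rf s/2 + k*m*(b-a)*W s)/(k+m)" for s
  define C where "C = \<omega>0^2*(\<alpha>p*p0^2 - \<alpha>m*r0^2)"
  define P where "P s = (U s + C/U s)/(2*k)" for s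
  define Q where "Q s = (U s - C/U s)/(2*m)" for s
  define Y where "Y s = a + P s / W s" for s
  define W' where "W' s = Rf s/(2*W s)" for s
  define U' where "U' s = (K + k*m*(b-a)*W' s)/(k+m)" for s
  define P' where "P' s = (U' s - C*U' s/(U s)^2)/(2*k)" for s
  define Y' where "Y' s = (P' s * W s - P s * W' s)/(W s)^2" for s
  define U0 where "U0 = \<omega>0*(k*p0+m*r0)"
  have U0: "U0 > 0" using w0 k m p0 r0 by (simp add: U0_def add_pos_pos)
  have C: "C = \<omega>0^2*(k*p0 - m*r0)*(k*p0+m*r0)"
    unfolding C_def by (simp add: power2_eq_square algebra_simps flip: k(2) m(2))
  have CU0: "\<bar>C\<bar> < U0^2"
  proof -
    have "\<bar>k*p0 - m*r0\<bar> < k*p0+m*r0" using k m p0 r0 by (auto simp: abs_if)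
    then have "\<omega>0^2 * \<bar>k*p0 - m*r0\<bar> * (k*p0+m*r0) < \<omega>0^2 * (k*p0+m*r0) * (k*p0+m*r0)"
      using w0 k m p0 r0 by (intro mult_strict_right_mono mult_strict_left_mono) (auto intro: add_pos_pos)
    moreover have "\<bar>C\<bar> = \<omega>0^2 * \<bar>k*p0 - m*r0\<bar> * (k*p0+m*r0)"
      unfolding C using k m p0 r0 by (simp add: abs_mult)
    moreover have "U0^2 = \<omega>0^2 * (k*p0+m*r0) * (k*p0+m*r0)"
      by (simp add: U0_def power2_eq_square algebra_simps)
    ultimately show ?thesis by simp
  qed
  have qpos: "q s \<ge> \<omega>0^2" if "s \<ge> 0" for s using that R0 K by (simp add: q_def)
  have Wge: "W s \<ge> \<omega>0" if "s \<ge> 0" for s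
    using real_sqrt_le_mono[OF qpos[OF that]] w0 by (simp add: W_def)
  have Wpos: "W s > 0" if "s \<ge> 0" for s using Wge[OF that] w0 by simp
  have Wsq: "(W s)^2 = q s" if "s \<ge> 0" for s
    using qpos[OF that] by (simp add: W_def) (meson order_trans zero_le_power2)
  have W0: "W 0 = \<omega>0" using w0 by (simp add: W_def q_def)
  have Rfge: "Rf s \<ge> R0" if "s \<ge> 0" for s using that K by (simp add: Rf_def)
  have Uge: "U s \<ge> U0" if "s \<ge> 0" for s
  proof -
    have "Rf s/2 + k*m*(b-a)*W s \<ge> R0/2 + k*m*(b-a)*\<omega>0"
      using Rfge[OF that] Wge[OF that] k m ya yb by (intro add_mono mult_left_mono) auto
    also have "R0/2 + k*m*(b-a)*\<omega>0 = U0*(k+m)"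
      unfolding R0_def U0_def ba by (simp add: algebra_simps power2_eq_square flip: k(2) m(2))
    finally show ?thesis using k m by (simp add: U_def field_simps)
  qed
  have Upos: "U s > 0" if "s \<ge> 0" for s using Uge[OF that] U0 by simp
  have CU: "\<bar>C\<bar> < (U s)^2" if "s \<ge> 0" for s
    using CU0 power_mono[OF Uge[OF that], of 2] U0 by linarith
  have Ppos: "P s > 0" if "s \<ge> 0" for s
  proof -
    have "U s * U s + C > 0" using CU[OF that] by (simp add: power2_eq_square abs_if split: if_splits)
    then have "U s + C / U s > 0" using Upos[OF that] by (simp add: field_simps)
    then show ?thesis using k by (simp add: P_def)
  qed
  have Qpos: "Q s > 0" if "s \<ge> 0" for s
  proof -
    have "U s * U s - C > 0" using CU[OF that] by (simp add: power2_eq_square abs_if split: if_splits)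
    then have "U s - C / U s > 0" using Upos[OF that] by (simp add: field_simps)
    then show ?thesis using m by (simp add: Q_def)
  qed
  have I1: "K * q s - (Rf s)^2/4 = (\<alpha>m - \<alpha>p)*C" for s
    unfolding K_def q_def Rf_def R0_def C_def ba by (simp add: power2_eq_square algebra_simps)
  have kmU: "(k+m) * U s = Rf s/2 + k*m*(b-a)*W s" for s using k m by (simp add: U_def)
  have I0: "U s * (k*m*(b-a)*W s - Rf s/2) = (m-k)*C" if "s \<ge> 0" for s
  proof -
    have "(k+m) * (U s * (k*m*(b-a)*W s - Rf s/2)) = (Rf s/2 + k*m*(b-a)*W s)*(k*m*(b-a)*W s - Rf s/2)"
      by (simp only: mult.assoc[symmetric] kmU)
    also have "\<dots> = K * (W s)^2 - (Rf s)^2/4" unfolding Kkm by (simp add: power2_eq_square algebra_simps)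
    also have "\<dots> = (k+m)*((m-k)*C)" unfolding Wsq[OF that] I1 using k m
      by (simp add: algebra_simps power2_eq_square flip: k(2) m(2))
    finally show ?thesis using k m by simp
  qed
  have I2: "P s + Q s = (b-a) * W s" if "s \<ge> 0" for s
  proof -
    have u: "U s \<noteq> 0" using Upos[OF that] by simp
    have "(2*k*m*U s) * (P s + Q s) = m*(U s * U s + C) + k*(U s * U s - C)"
      using k m u unfolding P_def Q_def by (simp add: field_simps)
    also have "\<dots> = U s * ((k+m)*U s) + (m-k)*C" by (simp add: algebra_simps)
    also have "\<dots> = (2*k*m*U s) * ((b-a) * W s)"
      unfolding I0[OF that, symmetric] kmU by (simp add: algebra_simps)
    finally show ?thesis using k m u by simp
  qed
  have I3: "\<alpha>p * P s + \<alpha>m * Q s = Rf s / 2" if "s \<ge> 0" for s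
  proof -
    have u: "U s \<noteq> 0" using Upos[OF that] by simp
    have "2 * U s * (\<alpha>p * P s + \<alpha>m * Q s) = k*(U s * U s + C) + m*(U s * U s - C)"
      using k m u unfolding P_def Q_def by (simp add: field_simps power2_eq_square flip: k(2) m(2))
    also have "\<dots> = U s * ((k+m)*U s) - (m-k)*C" by (simp add: algebra_simps)
    also have "\<dots> = 2 * U s * (Rf s / 2)"
      unfolding I0[OF that, symmetric] kmU by (simp add: algebra_simps)
    finally show ?thesis using u by simp
  qed
  have Ya: "Y s - a = P s / W s" for s by (simp add: Y_def)
  have Yb: "b - Y s = Q s / W s" if "s \<ge> 0" for s
    using I2[OF that] Wpos[OF that] unfolding Y_def by (simp add: field_simps)
  have bd: "a < Y s \<and> Y s < b" if "s \<ge> 0" for s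
  proof -
    have "Y s - a > 0" unfolding Ya using Ppos[OF that] Wpos[OF that] by simp
    moreover have "b - Y s > 0" unfolding Yb[OF that] using Qpos[OF that] Wpos[OF that] by simp
    ultimately show ?thesis by simp
  qed
  have eW: "W' s = \<alpha>p*(Y s - a) + \<alpha>m*(b - Y s)" if "s \<ge> 0" for s
  proof -
    have "Rf s = 2*(\<alpha>p * P s + \<alpha>m * Q s)" using I3[OF that] by simp
    then show ?thesis unfolding Ya Yb[OF that] W'_def using Wpos[OF that] by (simp add: field_simps)
  qed
  have UW: "U' s * W s = k*m*(b-a) * U s" if "s \<ge> 0" for s
  proof -
    have "W' s * W s = Rf s / 2" using Wpos[OF that] by (simp add: W'_def)
    then have "U' s * W s = (K * W s + k*m*(b-a)*(Rf s/2))/(k+m)"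
      unfolding U'_def by (simp add: algebra_simps add_divide_distrib[symmetric] flip: \<open>W' s * W s = Rf s / 2\<close>)
    also have "\<dots> = k*m*(b-a) * ((k+m) * U s)/(k+m)" unfolding Kkm kmU
      by (simp add: power2_eq_square algebra_simps)
    also have "\<dots> = k*m*(b-a) * U s" using k(1) m(1) by simp
    finally show ?thesis .
  qed
  have I4: "P' s = \<alpha>m*(b-a)*Q s / W s" if "s \<ge> 0" for s
  proof -
    have u: "U s \<noteq> 0" using Upos[OF that] by simp
    have w: "W s \<noteq> 0" using Wpos[OF that] by simp
    have e: "U s ^2 - C = 2*m*U s*Q s" using m u by (simp add: Q_def field_simps power2_eq_square)
    have "P' s = U' s * (U s ^2 - C) / (2*k*(U s)^2)"
      using u k by (simp add: P'_def field_simps)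
    then have "P' s = U' s * (2*m*U s*Q s) / (2*k*(U s)^2)" unfolding e .
    also have "\<dots> = (U' s * W s) * m * Q s / (k * U s * W s)" using u w k m by (simp add: field_simps power2_eq_square)
    also have "\<dots> = \<alpha>m*(b-a)*Q s / W s" unfolding UW[OF that] using u w k m
      by (simp add: field_simps power2_eq_square flip: m(2))
    finally show ?thesis .
  qed
  have eY: "W s * Y' s = \<alpha>m*(b - Y s)^2 - \<alpha>p*(Y s - a)^2" if "s \<ge> 0" for s
  proof -
    have w: "W s \<noteq> 0" using Wpos[OF that] by simp
    have W'e: "W' s = (\<alpha>p * P s + \<alpha>m * Q s) / W s" unfolding W'_def I3[OF that] using w by simp
    have "W s * Y' s = (\<alpha>m*(b-a)*W s*Q s - P s * (\<alpha>p * P s + \<alpha>m * Q s))/ (W s)^2"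
      unfolding Y'_def I4[OF that] W'e using w by (simp add: field_simps power2_eq_square)
    also have "\<dots> = (\<alpha>m*(P s + Q s)*Q s - P s * (\<alpha>p * P s + \<alpha>m * Q s))/ (W s)^2"
      using I2[OF that] by (simp add: mult.assoc)
    also have "\<dots> = \<alpha>m*(b - Y s)^2 - \<alpha>p*(Y s - a)^2"
      unfolding Ya Yb[OF that] using w by (simp add: field_simps power2_eq_square)
    finally show ?thesis .
  qed
  have dq: "(q has_real_derivative Rf s) (at s within {0..})" for s
    unfolding q_def Rf_def by (auto intro!: derivative_eq_intros simp: algebra_simps)
  have dW: "(W has_real_derivative W' s) (at s within {0..})" if "s \<ge> 0" for s
  proof -
    have "((\<lambda>s. sqrt (q s)) has_real_derivative (inverse (sqrt (q s)) / 2) * Rf s) (at s within {0..})"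
      using qpos[OF that] w0 by (intro DERIV_chain2[OF DERIV_real_sqrt dq]) (smt (verit) zero_less_power)
    then show ?thesis by (simp add: W_def[abs_def] W'_def divide_simps mult.commute)
  qed
  have dU: "(U has_real_derivative U' s) (at s within {0..})" if "s \<ge> 0" for s
  proof -
    have "((\<lambda>s. Rf s/2 + k*m*(b-a)*W s) has_real_derivative K + k*m*(b-a)*W' s) (at s within {0..})"
      unfolding Rf_def using dW[OF that] by (auto intro!: derivative_eq_intros)
    from DERIV_cdivide[OF this, of "k+m"] show ?thesis unfolding U_def[abs_def] U'_def .
  qed
  have dP: "(P has_real_derivative P' s) (at s within {0..})" if "s \<ge> 0" for s
  proof -
    have u: "U s \<noteq> 0" using Upos[OF that] by simp
    show ?thesis unfolding P_def[abs_def] P'_def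
      using dU[OF that] u k by (auto intro!: derivative_eq_intros simp: field_simps power2_eq_square)
  qed
  have dY: "(Y has_real_derivative Y' s) (at s within {0..})" if "s \<ge> 0" for s
  proof -
    have w: "W s \<noteq> 0" using Wpos[OF that] by simp
    show ?thesis unfolding Y_def[abs_def] Y'_def
      using dP[OF that] dW[OF that] w by (auto intro!: derivative_eq_intros simp: field_simps power2_eq_square)
  qed
  have cW: "continuous_on {0..} W" by (rule DERIV_continuous_on[OF dW]) auto
  have cY: "continuous_on {0..} Y" by (rule DERIV_continuous_on[OF dY]) auto
  have cRf: "continuous_on {0..} Rf" unfolding Rf_def[abs_def] by (intro continuous_intros)
  have Wnz: "\<forall>s\<in>{0..}. 2 * W s \<noteq> 0 \<and> W s \<noteq> 0" using Wpos by force
  have cW': "continuous_on {0..} W'"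
    unfolding W'_def[abs_def] using cRf cW Wnz by (intro continuous_intros) auto
  have cY': "continuous_on {0..} Y'"
  proof -
    have A: "continuous_on {0..} (\<lambda>s. (\<alpha>m*(b - Y s)^2 - \<alpha>p*(Y s - a)^2) / W s)"
      using cY cW Wnz by (intro continuous_intros) auto
    have B: "(\<alpha>m*(b - Y s)^2 - \<alpha>p*(Y s - a)^2) / W s = Y' s" if "s \<in> {0..}" for s
    proof -
      have s: "s \<ge> 0" using that by simp
      have "(\<alpha>m*(b - Y s)^2 - \<alpha>p*(Y s - a)^2) / W s = (W s * Y' s) / W s" using eY[OF s] by simp
      also have "\<dots> = Y' s" using Wpos[OF s] by simp
      finally show ?thesis .
    qed
    have C: "continuous_on {0..} (\<lambda>s. (\<alpha>m*(b - Y s)^2 - \<alpha>p*(Y s - a)^2) / W s) = continuous_on {0..} Y'"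
      by (rule continuous_on_cong[OF refl]) (rule B)
    show ?thesis using A C by simp
  qed
  have Y0: "Y 0 = y0"
  proof -
    have R0': "Rf 0 = R0" by (simp add: Rf_def)
    have e0: "R0/2 + k*m*(b-a)*\<omega>0 = U0*(k+m)"
      unfolding R0_def U0_def ba by (simp add: algebra_simps power2_eq_square flip: k(2) m(2))
    have "(k+m) * U 0 = (k+m) * U0" unfolding kmU R0' W0 e0 by simp
    then have U00: "U 0 = U0" using k(1) m(1) by simp
    have CU: "C / U0 = \<omega>0*(k*p0 - m*r0)" unfolding C U0_def
      using U0 unfolding U0_def by (simp add: power2_eq_square) (metis mult_eq_0_iff less_irrefl)
    have "P 0 = (U 0 + C/U 0)/(2*k)" by (simp add: P_def)
    also have "\<dots> = (U0 + \<omega>0*(k*p0 - m*r0))/(2*k)" unfolding CU U00 ..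
    also have "\<dots> = \<omega>0 * p0" unfolding U0_def using k(1) by (simp add: field_simps)
    finally have "P 0 = \<omega>0 * p0" .
    then show ?thesis unfolding Y_def W0 using w0 by (simp add: p0_def)
  qed
  show ?thesis
    using dW dY cW' cY' eW eY bd W0 Y0
    by (intro exI[of _ W] exI[of _ Y] exI[of _ W'] exI[of _ Y']) simp
qed

theorem mainTheorem14:
  fixes \<mu> ua \<alpha>m \<alpha>p um up \<sigma>0 \<omega>0 :: real
  assumes "\<mu> > 0" and "\<alpha>m > 0" and "\<alpha>p > 0" and "um > up"
    and "up < \<sigma>0" and "\<sigma>0 < um" and "\<omega>0 \<ge> 0"
  shows "\<exists>(\<omega>::real \<Rightarrow> real) (\<sigma>::real \<Rightarrow> real) \<omega>' \<sigma>'.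
    (\<forall>t\<ge>0. (\<omega> has_real_derivative \<omega>' t) (at t within {0..})
            \<and> (\<sigma> has_real_derivative \<sigma>' t) (at t within {0..}))
    \<and> continuous_on {0..} \<omega>' \<and> continuous_on {0..} \<sigma>'
    \<and> (\<forall>t\<ge>0. \<omega>' t = (\<alpha>p - \<alpha>m) * \<sigma> t
                 - (\<alpha>p * ustate ua up \<mu> t - \<alpha>m * ustate ua um \<mu> t))
    \<and> (\<forall>t\<ge>0. ((\<lambda>s. \<omega> s * \<sigma> s) has_real_derivative
           ((\<alpha>p * ustate ua up \<mu> t - \<alpha>m * ustate ua um \<mu> t) * \<sigma> t
            - (\<alpha>p * (ustate ua up \<mu> t)\<^sup>2 - \<alpha>m * (ustate ua um \<mu> t)\<^sup>2)
            + \<mu> * (ua - \<sigma> t) * \<omega> t)) (at t within {0..}))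
    \<and> \<omega> 0 = \<omega>0 \<and> \<sigma> 0 * \<omega> 0 = \<sigma>0 * \<omega>0
    \<and> (\<forall>t\<ge>0. ustate ua up \<mu> t < \<sigma> t \<and> \<sigma> t < ustate ua um \<mu> t)"
proof (cases "\<omega>0 = 0")
  case True
  define a where "a = up - ua"
  define b where "b = um - ua"
  define k where "k = sqrt \<alpha>p"
  define m where "m = sqrt \<alpha>m"
  have k: "k > 0" "k^2 = \<alpha>p" using assms by (auto simp: k_def)
  have m: "m > 0" "m^2 = \<alpha>m" using assms by (auto simp: m_def)
  have ab: "a < b" using assms by (simp add: a_def b_def)
  define c where "c = a + m*(b-a)/(k+m)"
  have ca: "c - a = m*(b-a)/(k+m)" by (simp add: c_def)
  have cb: "b - c = k*(b-a)/(k+m)" using k(1) m(1) by (simp add: c_def field_simps)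
  have bd: "a < c \<and> c < b"
  proof -
    have "c - a > 0" unfolding ca using k(1) m(1) ab by simp
    moreover have "b - c > 0" unfolding cb using k(1) m(1) ab by simp
    ultimately show ?thesis by simp
  qed
  have "\<alpha>p*(c - a) + \<alpha>m*(b - c) = (k*m*(b-a))*(k+m)/(k+m)"
    unfolding ca cb by (simp add: power2_eq_square algebra_simps flip: k(2) m(2) add_divide_distrib)
  then have eW: "k*m*(b-a) = \<alpha>p*(c - a) + \<alpha>m*(b - c)" using k(1) m(1) by simp
  have eY: "(k*m*(b-a)*s) * 0 = \<alpha>m*(b - c)^2 - \<alpha>p*(c - a)^2" for s
    unfolding ca cb using k(1) m(1) by (simp add: field_simps power2_eq_square flip: k(2) m(2))
  show ?thesis
    apply (rule transfer[where W="\<lambda>s. k*m*(b-a)*s" and Y="\<lambda>s. c" and W'="\<lambda>s. k*m*(b-a)" and Y'="\<lambda>s. 0"])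
    using assms(1) eW eY bd True
    by (auto intro!: derivative_eq_intros continuous_intros simp: a_def b_def)
next
  case False
  then have w0: "\<omega>0 > 0" using assms(7) by simp
  obtain W Y W' Y' where H: "\<forall>s\<ge>0. (W has_real_derivative W' s) (at s within {0..}) \<and> (Y has_real_derivative Y' s) (at s within {0..})"
    "continuous_on {0..} W'" "continuous_on {0..} Y'"
    "\<forall>s\<ge>0. W' s = \<alpha>p*(Y s - (up-ua)) + \<alpha>m*((um-ua) - Y s)"
    "\<forall>s\<ge>0. W s * Y' s = \<alpha>m*((um-ua) - Y s)^2 - \<alpha>p*(Y s - (up-ua))^2"
    "\<forall>s\<ge>0. (up-ua) < Y s \<and> Y s < (um-ua)" "W 0 = \<omega>0" "Y 0 = \<sigma>0 - ua"
    using pos_case[of \<alpha>m \<alpha>p "up-ua" "\<sigma>0 - ua" "um-ua" \<omega>0] assms w0 by auto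
  show ?thesis
    apply (rule transfer[where W=W and Y=Y and W'=W' and Y'=Y'])
    using assms(1) H by auto
qed

end
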